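(* Let $d\ge 2$ and $1\le k\le d^2$ be integers. Let $A,B,C,D$ be quantum systems, each with Hilbert space $\mathbb{C}^d$, and let $\psi^+_{XY}=|\psi^+\rangle\langle\psi^+|_{XY}$ with $|\psi^+\rangle=\frac{1}{\sqrt d}\sum_{i=0}^{d-1}|i\rangle|i\rangle$ denote the maximally entangled state on a pair of such systems $X,Y$. For a POVM $\{M^{(i)}_{DA}\}_{i=1}^{k}$ on $DA$ (i.e. $M^{(i)}_{DA}\ge 0$ and $\sum_{i=1}^k M^{(i)}_{DA}=\mathbf 1_{DA}$) and unitaries $\{U^{(i)}_B\}_{i=1}^k$ on $B$, define $$F\big(\{M^{(i)}_{DA},U^{(i)}_B\}\big)=\sum_{i=1}^{k}\operatorname{tr}\Big[\psi^+_{CB}\,U^{(i)}_B\,\operatorname{tr}_{AD}\big[(M^{(i)}_{DA}\otimes\mathbf 1_{CB})(\psi^+_{AB}\otimes\psi^+_{CD})\big]\,U^{(i)\dagger}_B\Big].$$ Then $$\max_{\{M^{(i)}_{DA},U^{(i)}_B\}} F\big(\{M^{(i)}_{DA},U^{(i)}_B\}\big)=\frac{k}{d^2},$$ where the maximum runs over all $k$-outcome POVMs on $DA$ and all choices of unitaries on $B$.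
   Context: This quantity is the entanglement fidelity of a teleportation protocol in which Alice measures $DA$ with a $k$-outcome POVM, communicates the outcome $i$ to Bob, and Bob applies the correction $U^{(i)}_B$; the goal is for $C$ and $B$ to end up maximally entangled. *)

theory Defs
  imports "Jordan_Normal_Form.Matrix" "Jordan_Normal_Form.Conjugate"
begin

(* Operators on a pair XY are (d*d) x (d*d) matrices, basis |x>|y> encoded as x*d + y
   (first-named system is the more significant index). Complex numbers carry the
   standard partial order of HOL-Library.Complex_Order (z <= w iff Im z = Im w and Re z <= Re w). *)

definition adjoint_mat :: "complex mat \<Rightarrow> complex mat" where
  "adjoint_mat A = mat (dim_col A) (dim_row A) (\<lambda>(i,j). cnj (A $$ (j,i)))"

definition psd_mat :: "nat \<Rightarrow> complex mat \<Rightarrow> bool" where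
  "psd_mat n M \<longleftrightarrow> M \<in> carrier_mat n n \<and>
     (\<forall>v \<in> carrier_vec n. 0 \<le> (\<Sum>i<n. cnj (v $ i) * (M *\<^sub>v v) $ i))"

definition unitary_mat :: "nat \<Rightarrow> complex mat \<Rightarrow> bool" where
  "unitary_mat n U \<longleftrightarrow> U \<in> carrier_mat n n \<and>
     U * adjoint_mat U = 1\<^sub>m n \<and> adjoint_mat U * U = 1\<^sub>m n"

(* k-outcome POVM {M i}_{i=1..k} on DA (index (dd,a) encoded as dd*d + a);
   the completeness relation sum_i M i = 1 is stated entrywise *)
definition is_povm :: "nat \<Rightarrow> nat \<Rightarrow> (nat \<Rightarrow> complex mat) \<Rightarrow> bool" where
  "is_povm d k M \<longleftrightarrow> (\<forall>i\<in>{1..k}. psd_mat (d*d) (M i)) \<and>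
     (\<forall>r<d*d. \<forall>s<d*d. (\<Sum>i\<in>{1..k}. M i $$ (r,s)) = 1\<^sub>m (d*d) $$ (r,s))"

(* matrix element <x y| psi^+ ><psi^+ |x' y'> of the maximally entangled state on XY *)
definition psi_plus :: "nat \<Rightarrow> nat \<Rightarrow> nat \<Rightarrow> nat \<Rightarrow> nat \<Rightarrow> complex" where
  "psi_plus d x y x' y' = (if x = y \<and> x' = y' then 1 / of_nat d else 0)"

(* matrix element <c b| tr_{AD}[(M_DA (x) 1_CB)(psi^+_AB (x) psi^+_CD)] |c' b'> *)
definition red_AD :: "nat \<Rightarrow> complex mat \<Rightarrow> nat \<Rightarrow> nat \<Rightarrow> nat \<Rightarrow> nat \<Rightarrow> complex" where
  "red_AD d M c b c' b' =
     (\<Sum>a<d. \<Sum>dd<d. \<Sum>a2<d. \<Sum>d2<d.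
        M $$ (dd*d + a, d2*d + a2) * psi_plus d a2 b a b' * psi_plus d c d2 c' dd)"

(* matrix element <c b| (1_C (x) U_B) R (1_C (x) U_B)^dagger |c' b'> for an operator R on CB *)
definition conj_B :: "nat \<Rightarrow> complex mat \<Rightarrow> (nat \<Rightarrow> nat \<Rightarrow> nat \<Rightarrow> nat \<Rightarrow> complex)
    \<Rightarrow> nat \<Rightarrow> nat \<Rightarrow> nat \<Rightarrow> nat \<Rightarrow> complex" where
  "conj_B d U R c b c' b' =
     (\<Sum>b1<d. \<Sum>b2<d. U $$ (b, b1) * R c b1 c' b2 * cnj (U $$ (b', b2)))"

definition tr_psi_CB :: "nat \<Rightarrow> (nat \<Rightarrow> nat \<Rightarrow> nat \<Rightarrow> nat \<Rightarrow> complex) \<Rightarrow> complex" where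
  "tr_psi_CB d X = (\<Sum>c<d. \<Sum>b<d. \<Sum>c'<d. \<Sum>b'<d. psi_plus d c b c' b' * X c' b' c b)"

definition tele_fid :: "nat \<Rightarrow> nat \<Rightarrow> (nat \<Rightarrow> complex mat) \<Rightarrow> (nat \<Rightarrow> complex mat) \<Rightarrow> complex" where
  "tele_fid d k M U = (\<Sum>i\<in>{1..k}. tr_psi_CB d (conj_B d (U i) (red_AD d (M i))))"

end

theory Submission
  imports Defs
begin
lemma red_AD_eq:
  assumes "c<d" "b<d" "c'<d" "b'<d"
  shows "red_AD d M c b c' b' = M $$ (c'*d+b', c*d+b) / (of_nat d)^2"
proof -
  have "red_AD d M c b c' b' = (\<Sum>a<d. \<Sum>dd<d. \<Sum>a2<d. \<Sum>d2<d.
        (if d2 = c then (if a2 = b then (if dd = c' then (if a = b' then M $$ (dd*d + a, d2*d + a2) / (of_nat d)^2 else 0) else 0) else 0) else 0))"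
    unfolding red_AD_def psi_plus_def by (intro sum.cong refl) (auto simp: power2_eq_square)
  also have "\<dots> = M $$ (c'*d+b', c*d+b) / (of_nat d)^2"
    using assms by (simp add: sum.delta)
  finally show ?thesis .
qed

lemma sum_split:
  fixes f :: "nat \<Rightarrow> 'a::comm_monoid_add"
  shows "(\<Sum>r<n*d. f r) = (\<Sum>c<n. \<Sum>b<d. f (c*d+b))"
proof -
  have "(\<Sum>r<n*d. f r) = (\<Sum>c<n. sum f {c*d..<c*d+d})"
    by (rule sum.nat_group[symmetric])
  also have "\<dots> = (\<Sum>c<n. \<Sum>b<d. f (c*d+b))"
  proof -
    have "sum f {c*d..<c*d+d} = (\<Sum>b<d. f (c*d+b))" for c
      using sum.shift_bounds_nat_ivl[of f 0 "c*d" d] by (simp add: lessThan_atLeast0 add.commute)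
    thus ?thesis by simp
  qed
  finally show ?thesis .
qed

lemma sum_if_out: "(\<Sum>x\<in>S. if P then f x else 0) = (if P then sum f S else 0)"
  by simp

definition qf :: "nat \<Rightarrow> complex mat \<Rightarrow> (nat \<Rightarrow> complex) \<Rightarrow> complex" where
  "qf n M w = (\<Sum>r<n. cnj (w r) * (\<Sum>s<n. M $$ (r,s) * w s))"

lemma fid_term:
  "tr_psi_CB d (conj_B d U (red_AD d M)) = qf (d*d) M (\<lambda>r. U $$ (r div d, r mod d)) / (of_nat d)^3"
proof (cases "d = 0")
  case True thus ?thesis by (simp add: tr_psi_CB_def qf_def)
next
  case False
  hence dp: "0 < d" by simp
  define T where "T c c' b1 b2 = cnj (U $$ (c,b2)) * M $$ (c*d+b2, c'*d+b1) * U $$ (c',b1)" for c c' b1 b2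
  have "tr_psi_CB d (conj_B d U (red_AD d M)) =
     (\<Sum>c<d. \<Sum>c'<d. conj_B d U (red_AD d M) c' c' c c / of_nat d)"
  proof -
    have "\<And>c b c' b'. psi_plus d c b c' b' * conj_B d U (red_AD d M) c' b' c b
      = (if b' = c' then (if b = c then conj_B d U (red_AD d M) c' b' c b / of_nat d else 0) else 0)"
      by (auto simp: psi_plus_def)
    thus ?thesis unfolding tr_psi_CB_def by (simp add: sum.delta sum_if_out)
  qed
  also have "\<dots> = (\<Sum>c<d. \<Sum>c'<d. (\<Sum>b1<d. \<Sum>b2<d. T c c' b1 b2) / (of_nat d)^3)"
  proof (intro sum.cong refl)
    fix c c' assume cc: "c \<in> {..<d}" "c' \<in> {..<d}"
    have "conj_B d U (red_AD d M) c' c' c c = (\<Sum>b1<d. \<Sum>b2<d. T c c' b1 b2 / (of_nat d)^2)"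
      unfolding conj_B_def
    proof (intro sum.cong refl)
      fix b1 b2 assume "b1 \<in> {..<d}" "b2 \<in> {..<d}"
      thus "U $$ (c', b1) * red_AD d M c' b1 c b2 * cnj (U $$ (c, b2)) = T c c' b1 b2 / (of_nat d)^2"
        using cc by (simp add: red_AD_eq T_def)
    qed
    thus "conj_B d U (red_AD d M) c' c' c c / of_nat d = (\<Sum>b1<d. \<Sum>b2<d. T c c' b1 b2) / (of_nat d)^3"
      using dp by (simp add: sum_divide_distrib[symmetric] power_def)
  qed
  also have "\<dots> = (\<Sum>c<d. \<Sum>c'<d. \<Sum>b1<d. \<Sum>b2<d. T c c' b1 b2) / (of_nat d)^3"
    by (simp add: sum_divide_distrib)
  also have "(\<Sum>c<d. \<Sum>c'<d. \<Sum>b1<d. \<Sum>b2<d. T c c' b1 b2) = qf (d*d) M (\<lambda>r. U $$ (r div d, r mod d))"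
  proof -
    have "qf (d*d) M (\<lambda>r. U $$ (r div d, r mod d)) = (\<Sum>c<d. \<Sum>b2<d. \<Sum>c'<d. \<Sum>b1<d. T c c' b1 b2)"
      unfolding qf_def sum_split T_def using dp by (simp add: sum_distrib_left mult.assoc)
    also have "\<dots> = (\<Sum>c<d. \<Sum>c'<d. \<Sum>b2<d. \<Sum>b1<d. T c c' b1 b2)"
      by (intro sum.cong refl sum.swap)
    also have "\<dots> = (\<Sum>c<d. \<Sum>c'<d. \<Sum>b1<d. \<Sum>b2<d. T c c' b1 b2)"
      by (intro sum.cong refl sum.swap)
    finally show ?thesis by simp
  qed
  finally show ?thesis .
qed

lemma qf_vec:
  assumes "M \<in> carrier_mat n n"
  shows "(\<Sum>i<n. cnj (vec n w $ i) * (M *\<^sub>v vec n w) $ i) = qf n M w"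
  unfolding qf_def using assms
  by (intro sum.cong refl) (auto simp: scalar_prod_def lessThan_atLeast0)

lemma psd_qf: "psd_mat n M \<Longrightarrow> 0 \<le> qf n M w"
  unfolding psd_mat_def using qf_vec[of M n w] by (metis vec_carrier)

lemma povm_sum_qf:
  assumes "is_povm d k M"
  shows "(\<Sum>j\<in>{1..k}. qf (d*d) (M j) w) = (\<Sum>r<d*d. cnj (w r) * w r)"
proof -
  have "(\<Sum>j\<in>{1..k}. qf (d*d) (M j) w) = (\<Sum>r<d*d. cnj (w r) * (\<Sum>s<d*d. (\<Sum>j\<in>{1..k}. M j $$ (r,s)) * w s))"
  proof -
    have "(\<Sum>j\<in>{1..k}. qf (d*d) (M j) w) = (\<Sum>j\<in>{1..k}. \<Sum>r<d*d. \<Sum>s<d*d. cnj (w r) * M j $$ (r,s) * w s)"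
      unfolding qf_def by (simp add: sum_distrib_left mult_ac)
    also have "\<dots> = (\<Sum>r<d*d. \<Sum>j\<in>{1..k}. \<Sum>s<d*d. cnj (w r) * M j $$ (r,s) * w s)"
      by (rule sum.swap)
    also have "\<dots> = (\<Sum>r<d*d. \<Sum>s<d*d. \<Sum>j\<in>{1..k}. cnj (w r) * M j $$ (r,s) * w s)"
      by (intro sum.cong refl sum.swap)
    finally show ?thesis by (simp add: sum_distrib_left sum_distrib_right mult_ac)
  qed
  also have "\<dots> = (\<Sum>r<d*d. cnj (w r) * (\<Sum>s<d*d. (if r = s then w s else 0)))"
  proof -
    have "(\<Sum>j\<in>{1..k}. M j $$ (r,s)) * w s = (if r = s then w s else 0)" if "r < d*d" "s<d*d" for r s
      using assms that unfolding is_povm_def by auto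
    thus ?thesis by simp
  qed
  also have "\<dots> = (\<Sum>r<d*d. cnj (w r) * w r)" by simp
  finally show ?thesis .
qed

lemma povm_qf_le:
  assumes "is_povm d k M" "i \<in> {1..k}"
  shows "qf (d*d) (M i) w \<le> (\<Sum>r<d*d. cnj (w r) * w r)"
proof -
  have "qf (d*d) (M i) w \<le> (\<Sum>j\<in>{1..k}. qf (d*d) (M j) w)"
    using assms unfolding is_povm_def by (intro member_le_sum) (auto intro: psd_qf)
  thus ?thesis using povm_sum_qf[OF assms(1)] by simp
qed

lemma unitary_row:
  assumes "unitary_mat d U" "c < d"
  shows "(\<Sum>b<d. cnj (U $$ (c, b)) * U $$ (c, b)) = 1"
proof -
  have car: "U \<in> carrier_mat d d" and eq: "U * adjoint_mat U = 1\<^sub>m d"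
    using assms(1) by (auto simp: unitary_mat_def)
  have "(U * adjoint_mat U) $$ (c,c) = 1" using eq assms(2) by simp
  moreover have "(U * adjoint_mat U) $$ (c,c) = (\<Sum>b<d. cnj (U $$ (c, b)) * U $$ (c, b))"
    using car assms(2) by (simp add: adjoint_mat_def scalar_prod_def lessThan_atLeast0 mult.commute)
  ultimately show ?thesis by simp
qed

lemma unitary_norm:
  assumes "unitary_mat d U"
  shows "(\<Sum>r<d*d. cnj (U $$ (r div d, r mod d)) * U $$ (r div d, r mod d)) = of_nat d"
proof -
  have "(\<Sum>r<d*d. cnj (U $$ (r div d, r mod d)) * U $$ (r div d, r mod d))
     = (\<Sum>c<d. \<Sum>b<d. cnj (U $$ (c, b)) * U $$ (c, b))"
    unfolding sum_split by (intro sum.cong refl) simp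
  also have "\<dots> = of_nat d"
    using assms by (simp add: unitary_row)
  finally show ?thesis .
qed

lemma upper:
  assumes "is_povm d k M" "\<forall>i\<in>{1..k}. unitary_mat d (U i)"
  shows "tele_fid d k M U \<le> complex_of_real (real k / real d ^ 2)"
proof -
  let ?q = "\<lambda>i. qf (d*d) (M i) (\<lambda>r. U i $$ (r div d, r mod d))"
  have le: "?q i \<le> of_nat d" if "i \<in> {1..k}" for i
    using povm_qf_le[OF assms(1) that, of "\<lambda>r. U i $$ (r div d, r mod d)"]
      unitary_norm[of d "U i"] assms(2) that by simp
  have S: "(\<Sum>i\<in>{1..k}. ?q i) \<le> of_nat k * of_nat d"
  proof -
    have "(\<Sum>i\<in>{1..k}. ?q i) \<le> (\<Sum>i\<in>{1..k}. of_nat d)" by (rule sum_mono) (rule le)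
    thus ?thesis by simp
  qed
  have T: "tele_fid d k M U = (\<Sum>i\<in>{1..k}. ?q i) / (of_nat d)^3"
    unfolding tele_fid_def fid_term by (simp add: sum_divide_distrib)
  show ?thesis
  proof (cases "d = 0")
    case True thus ?thesis using T by simp
  next
    case False
    define S where "S = (\<Sum>i\<in>{1..k}. ?q i)"
    have ReS: "Re S \<le> real k * real d" and ImS: "Im S = 0"
      using S unfolding S_def by (auto simp: less_eq_complex_def)
    have Seq: "S = complex_of_real (Re S)" using ImS by (simp add: complex_eq_iff)
    have tf: "tele_fid d k M U = complex_of_real (Re S / real d ^ 3)"
    proof -
      have "tele_fid d k M U = complex_of_real (Re S) / complex_of_real (real d ^ 3)"
        using T Seq unfolding S_def by simp
      thus ?thesis by (simp only: of_real_divide)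
    qed
    have "Re S / real d ^ 3 \<le> real k * real d / real d ^ 3"
      using ReS by (intro divide_right_mono) auto
    also have "real k * real d / real d ^ 3 = real k / real d ^ 2"
      using False by (simp add: power_def)
    finally have "Re S / real d ^ 3 \<le> real k / real d ^ 2" .
    thus ?thesis unfolding tf by (simp add: less_eq_complex_def)
  qed
qed


lemma geo_cis:
  fixes m :: int
  assumes "0 < d" "\<not> (int d dvd m)"
  shows "(\<Sum>s<d. cis (2 * pi * real_of_int m * real s / real d)) = 0"
proof -
  define z where "z = cis (2 * pi * real_of_int m / real d)"
  have pw: "cis (2 * pi * real_of_int m * real s / real d) = z ^ s" for s
    unfolding z_def DeMoivre by (simp add: field_simps)
  have z1: "z \<noteq> 1"
  proof
    assume "z = 1"
    hence "sin (2 * pi * real_of_int m / real d) = sin 0 \<and> cos (2 * pi * real_of_int m / real d) = cos 0"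
      unfolding z_def by (simp add: complex_eq_iff)
    then obtain n :: int where "2 * pi * real_of_int m / real d = 0 + 2 * pi * n"
      using sin_cos_eq_iff by blast
    hence "real_of_int m = real_of_int n * real d" using assms(1) by (simp add: field_simps)
    hence "m = n * int d" by (metis of_int_eq_iff of_int_mult of_int_of_nat_eq)
    thus False using assms(2) by simp
  qed
  have zd: "z ^ d = 1"
    unfolding z_def DeMoivre using assms(1)
    by (simp add: field_simps) (metis cis_multiple_2pi Ints_of_int mult.assoc mult.commute)
  show ?thesis unfolding pw geometric_sum[OF z1] zd by simp
qed

lemma inj_mod_add:
  assumes "s < d" "s' < d" "(s + a) mod d = (s' + a) mod (d::nat)"
  shows "s = s'"
proof -
  have A: "x = y" if "y \<le> x" "x < d" "(x + a) mod d = (y + a) mod d" for x y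
  proof -
    have "d dvd (x + a) - (y + a)" using mod_eq_dvd_iff_nat[of "y+a" "x+a" d] that by simp
    hence "d dvd x - y" by simp
    moreover have "x - y < d" using that by simp
    ultimately have "x - y = 0" using dvd_imp_le by fastforce
    thus ?thesis using that by simp
  qed
  show ?thesis using A[of s' s] A[of s s'] assms by (cases "s' \<le> s") auto
qed

lemma sum_reindex_mod:
  fixes g :: "nat \<Rightarrow> 'a::comm_monoid_add"
  shows "(\<Sum>s<d. g ((s + a) mod d)) = (\<Sum>r<d. g r)"
proof (cases "d = 0")
  case True thus ?thesis by simp
next
  case False
  have inj: "inj_on (\<lambda>s. (s + a) mod d) {..<d}"
    by (auto intro!: inj_onI intro: inj_mod_add)
  have img: "(\<lambda>s. (s + a) mod d) ` {..<d} = {..<d}"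
    using False by (intro endo_inj_surj inj) auto
  show ?thesis using sum.reindex[OF inj, of g] img by (simp add: comp_def)
qed

lemma sum_unique_mod:
  assumes "r < (d::nat)"
  shows "(\<Sum>s<d. if (s + a) mod d = r then c else 0) = c"
proof -
  have "(\<Sum>s<d. if (s + a) mod d = r then c else 0) = (\<Sum>r'<d. if r' = r then c else 0)"
    using sum_reindex_mod[where g="\<lambda>r'. if r' = r then c else 0" and d=d and a=a] by simp
  also have "\<dots> = c" using assms by simp
  finally show ?thesis .
qed

lemma geo_delta:
  assumes "b < d" "b' < (d::nat)"
  shows "(\<Sum>x<d. cis (2 * pi * (real b' - real b) * real x / real d)) = (if b = b' then of_nat d else 0)"
proof (cases "b = b'")
  case True thus ?thesis by simp
next
  case False
  have "\<not> int d dvd (int b' - int b)"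
  proof
    assume "int d dvd (int b' - int b)"
    hence "\<bar>int d\<bar> \<le> \<bar>int b' - int b\<bar>" using False by (intro dvd_imp_le_int) auto
    thus False using assms by simp
  qed
  thus ?thesis using geo_cis[of d "int b' - int b"] False assms by simp
qed

definition ent :: "nat \<Rightarrow> nat \<Rightarrow> nat \<Rightarrow> nat \<Rightarrow> nat \<Rightarrow> complex" where
  "ent d a b r s = (if r = (s + a) mod d then cis (2 * pi * real b * real s / real d) else 0)"

lemma mod_add_eq_iff:
  assumes "a < d" "a' < (d::nat)"
  shows "(x + a) mod d = (x + a') mod d \<longleftrightarrow> a = a'"
  using inj_mod_add[OF assms, of x] by (auto simp: add.commute)

lemma ent_orth:
  assumes "a < d" "a' < d" "b < d" "b' < d"
  shows "(\<Sum>c<d. \<Sum>x<d. cnj (ent d a b c x) * ent d a' b' c x) = (if a = a' \<and> b = b' then of_nat d else 0)"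
proof -
  have dp: "0 < d" using assms by simp
  have pt: "cnj (ent d a b c x) * ent d a' b' c x =
     (if c = (x + a) mod d then (if a = a' then cis (2 * pi * (real b' - real b) * real x / real d) else 0) else 0)" for c x
    using mod_add_eq_iff[OF assms(1,2), of x]
    by (auto simp: ent_def cis_cnj cis_mult field_simps) (simp_all add: diff_divide_distrib)
  have "(\<Sum>c<d. \<Sum>x<d. cnj (ent d a b c x) * ent d a' b' c x) =
        (\<Sum>x<d. \<Sum>c<d. cnj (ent d a b c x) * ent d a' b' c x)" by (rule sum.swap)
  also have "\<dots> = (\<Sum>x<d. if a = a' then cis (2 * pi * (real b' - real b) * real x / real d) else 0)"
    unfolding pt using dp by (simp add: sum.delta)
  also have "\<dots> = (if a = a' \<and> b = b' then of_nat d else 0)"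
    using geo_delta[OF assms(3,4)] by (simp add: sum_if_out)
  finally show ?thesis .
qed

lemma ent_compl:
  assumes "r1 < d" "r2 < d" "s1 < d" "s2 < d"
  shows "(\<Sum>a<d. \<Sum>b<d. ent d a b r1 r2 * cnj (ent d a b s1 s2)) = (if r1 = s1 \<and> r2 = s2 then of_nat d else 0)"
proof -
  have pt: "ent d a b r1 r2 * cnj (ent d a b s1 s2) =
     (if r1 = (r2 + a) mod d \<and> s1 = (s2 + a) mod d then cis (2 * pi * (real r2 - real s2) * real b / real d) else 0)" for a b
    by (auto simp: ent_def cis_cnj cis_mult field_simps) (simp_all add: diff_divide_distrib)
  have "(\<Sum>a<d. \<Sum>b<d. ent d a b r1 r2 * cnj (ent d a b s1 s2)) =
     (\<Sum>a<d. if r1 = (r2 + a) mod d \<and> s1 = (s2 + a) mod d then (if s2 = r2 then of_nat d else 0) else 0)"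
    proof -
    have gd: "(\<Sum>b<d. cis (2 * pi * (real r2 - real s2) * real b / real d)) = (if s2 = r2 then of_nat d else 0)"
      by (rule geo_delta[OF assms(4,2)])
    show ?thesis unfolding pt sum_if_out gd ..
  qed
  also have "\<dots> = (if r1 = s1 \<and> r2 = s2 then of_nat d else 0)"
  proof (cases "r2 = s2 \<and> r1 = s1")
    case True
    hence "(\<Sum>a<d. if r1 = (r2 + a) mod d \<and> s1 = (s2 + a) mod d then (if s2 = r2 then of_nat d else 0) else 0)
       = (\<Sum>a<d. if (a + r2) mod d = r1 then (of_nat d :: complex) else 0)"
      by (intro sum.cong refl) (auto simp: add.commute)
    also have "\<dots> = of_nat d" by (rule sum_unique_mod[OF assms(1)])
    finally show ?thesis using True by simp
  next
    case False thus ?thesis by (intro trans[OF sum.neutral]) auto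
  qed
  finally show ?thesis .
qed

definition Wm :: "nat \<Rightarrow> nat \<Rightarrow> nat \<Rightarrow> complex mat" where
  "Wm d a b = mat d d (\<lambda>(r,s). ent d a b r s)"

lemma cis_cnj_self: "cis x * cnj (cis x) = 1" "cnj (cis x) * cis x = 1"
  by (simp_all add: cis_cnj cis_mult)

lemma Wm_unitary:
  assumes "0 < d"
  shows "unitary_mat d (Wm d a b)"
proof -
  have adj: "adjoint_mat (Wm d a b) = mat d d (\<lambda>(r,s). cnj (ent d a b s r))"
    unfolding adjoint_mat_def Wm_def by (rule eq_matI) auto
  have 1: "Wm d a b * adjoint_mat (Wm d a b) = 1\<^sub>m d"
  proof (rule eq_matI)
    fix r r' assume rr: "r < dim_row (1\<^sub>m d)" "r' < dim_col (1\<^sub>m d)"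
    have pt: "ent d a b r s * cnj (ent d a b r' s) = (if r' = r then (if (s + a) mod d = r then 1 else 0) else 0)" for s
      by (auto simp: ent_def cis_cnj_self)
    have "(Wm d a b * adjoint_mat (Wm d a b)) $$ (r, r') = (\<Sum>s<d. ent d a b r s * cnj (ent d a b r' s))"
      using rr unfolding adj by (simp add: Wm_def scalar_prod_def lessThan_atLeast0)
    also have "\<dots> = (if r' = r then 1 else 0)"
      unfolding pt sum_if_out using sum_unique_mod[of r d a "1::complex"] rr by simp
    finally show "(Wm d a b * adjoint_mat (Wm d a b)) $$ (r, r') = 1\<^sub>m d $$ (r, r')" using rr by auto
  qed (auto simp: Wm_def adjoint_mat_def)
  have 2: "adjoint_mat (Wm d a b) * Wm d a b = 1\<^sub>m d"
  proof (rule eq_matI)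
    fix s s' assume ss: "s < dim_row (1\<^sub>m d)" "s' < dim_col (1\<^sub>m d)"
    have pt: "cnj (ent d a b r s) * ent d a b r s' = (if r = (s + a) mod d then (if s = s' then 1 else 0) else 0)" for r
      using inj_mod_add[of s d s' a] ss by (auto simp: ent_def cis_cnj_self)
    have "(adjoint_mat (Wm d a b) * Wm d a b) $$ (s, s') = (\<Sum>r<d. cnj (ent d a b r s) * ent d a b r s')"
      using ss unfolding adj by (simp add: Wm_def scalar_prod_def lessThan_atLeast0)
    also have "\<dots> = (if s = s' then 1 else 0)"
      unfolding pt using assms by (simp add: sum.delta)
    finally show "(adjoint_mat (Wm d a b) * Wm d a b) $$ (s, s') = 1\<^sub>m d $$ (s, s')" using ss by auto
  qed (auto simp: Wm_def adjoint_mat_def)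
  show ?thesis unfolding unitary_mat_def using 1 2 by (simp add: Wm_def)
qed

definition ia :: "nat \<Rightarrow> nat \<Rightarrow> nat" where "ia d j = (j - 1) div d"
definition ib :: "nat \<Rightarrow> nat \<Rightarrow> nat" where "ib d j = (j - 1) mod d"
definition vv :: "nat \<Rightarrow> nat \<Rightarrow> nat \<Rightarrow> complex" where
  "vv d j r = ent d (ia d j) (ib d j) (r div d) (r mod d)"

lemma ia_lt: "j \<in> {1..d*d} \<Longrightarrow> ia d j < d"
  unfolding ia_def by (auto simp: less_mult_imp_div_less)
lemma ib_lt: "j \<in> {1..d*d} \<Longrightarrow> ib d j < d"
  unfolding ib_def by (cases "d = 0") auto

lemma iab_inj:
  assumes "j \<in> {1..d*d}" "l \<in> {1..d*d}"
  shows "(ia d l = ia d j \<and> ib d l = ib d j) \<longleftrightarrow> l = j"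
proof
  assume "ia d l = ia d j \<and> ib d l = ib d j"
  hence "(l - 1) div d * d + (l - 1) mod d = (j - 1) div d * d + (j - 1) mod d"
    unfolding ia_def ib_def by simp
  hence "l - 1 = j - 1" by simp
  thus "l = j" using assms by auto
qed simp

lemma sum_pairs:
  fixes g :: "nat \<Rightarrow> nat \<Rightarrow> 'a::comm_monoid_add"
  shows "(\<Sum>j\<in>{1..d*d}. g (ia d j) (ib d j)) = (\<Sum>a<d. \<Sum>b<d. g a b)"
proof -
  have "(\<Sum>j\<in>{1..d*d}. g (ia d j) (ib d j)) = (\<Sum>t<d*d. g (t div d) (t mod d))"
    unfolding One_nat_def sum.atLeast1_atMost_eq ia_def ib_def by simp
  also have "\<dots> = (\<Sum>a<d. \<Sum>b<d. g a b)"
    unfolding sum_split by (intro sum.cong refl) simp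
  finally show ?thesis .
qed

lemma vv_orth:
  assumes "j \<in> {1..d*d}" "l \<in> {1..d*d}"
  shows "(\<Sum>r<d*d. cnj (vv d l r) * vv d j r) = (if l = j then of_nat d else 0)"
proof -
  have "(\<Sum>r<d*d. cnj (vv d l r) * vv d j r) =
     (\<Sum>c<d. \<Sum>x<d. cnj (ent d (ia d l) (ib d l) c x) * ent d (ia d j) (ib d j) c x)"
    unfolding sum_split vv_def by (intro sum.cong refl) simp
  also have "\<dots> = (if l = j then of_nat d else 0)"
    using ent_orth[OF ia_lt[OF assms(2)] ia_lt[OF assms(1)] ib_lt[OF assms(2)] ib_lt[OF assms(1)]]
      iab_inj[OF assms] by simp
  finally show ?thesis .
qed

lemma vv_compl:
  assumes "r < d*d" "s < d*d"
  shows "(\<Sum>j\<in>{1..d*d}. vv d j r * cnj (vv d j s)) = (if r = s then of_nat d else 0)"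
proof -
  have dp: "0 < d" using assms by (cases d) auto
  have "(\<Sum>j\<in>{1..d*d}. vv d j r * cnj (vv d j s)) = (\<Sum>a<d. \<Sum>b<d. ent d a b (r div d) (r mod d) * cnj (ent d a b (s div d) (s mod d)))"
    unfolding vv_def by (rule sum_pairs)
  also have "\<dots> = (if r div d = s div d \<and> r mod d = s mod d then of_nat d else 0)"
    using assms dp by (intro ent_compl) (auto simp: less_mult_imp_div_less)
  also have "\<dots> = (if r = s then of_nat d else 0)"
    by (metis div_mult_mod_eq)
  finally show ?thesis .
qed

definition Lset :: "nat \<Rightarrow> nat \<Rightarrow> nat \<Rightarrow> nat set" where
  "Lset d k j = (if j < k then {j} else {k..d*d})"

definition Mc :: "nat \<Rightarrow> nat \<Rightarrow> nat \<Rightarrow> complex mat" where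
  "Mc d k j = mat (d*d) (d*d) (\<lambda>(r,s). \<Sum>l\<in>Lset d k j. vv d l r * cnj (vv d l s) / of_nat d)"

lemma qf_Mc:
  "qf (d*d) (Mc d k j) w = (\<Sum>l\<in>Lset d k j. cnj (\<Sum>s<d*d. cnj (vv d l s) * w s) * (\<Sum>s<d*d. cnj (vv d l s) * w s) / of_nat d)"
proof -
  have "qf (d*d) (Mc d k j) w = (\<Sum>r<d*d. \<Sum>s<d*d. \<Sum>l\<in>Lset d k j. cnj (w r) * vv d l r * cnj (vv d l s) * w s / of_nat d)"
    unfolding qf_def Mc_def
    by (intro sum.cong refl) (simp add: sum_distrib_left sum_distrib_right sum_divide_distrib mult_ac)
  also have "\<dots> = (\<Sum>r<d*d. \<Sum>l\<in>Lset d k j. \<Sum>s<d*d. cnj (w r) * vv d l r * cnj (vv d l s) * w s / of_nat d)"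
    by (intro sum.cong refl sum.swap)
  also have "\<dots> = (\<Sum>l\<in>Lset d k j. \<Sum>r<d*d. \<Sum>s<d*d. cnj (w r) * vv d l r * cnj (vv d l s) * w s / of_nat d)"
    by (rule sum.swap)
  also have "\<dots> = (\<Sum>l\<in>Lset d k j. cnj (\<Sum>s<d*d. cnj (vv d l s) * w s) * (\<Sum>s<d*d. cnj (vv d l s) * w s) / of_nat d)"
    by (intro sum.cong refl) (simp add: cnj_sum sum_distrib_left sum_distrib_right sum_divide_distrib mult_ac)
  finally show ?thesis .
qed

lemma psd_of_qf:
  assumes "M \<in> carrier_mat n n" "\<And>w. 0 \<le> qf n M w"
  shows "psd_mat n M"
  unfolding psd_mat_def
proof (intro conjI ballI assms(1))
  fix v :: "complex vec" assume v: "v \<in> carrier_vec n"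
  have "v = vec n (\<lambda>i. v $ i)" using v by (intro eq_vecI) auto
  hence "(\<Sum>i<n. cnj (v $ i) * (M *\<^sub>v v) $ i) = qf n M (\<lambda>i. v $ i)"
    using qf_vec[OF assms(1), of "\<lambda>i. v $ i"] by simp
  thus "0 \<le> (\<Sum>i<n. cnj (v $ i) * (M *\<^sub>v v) $ i)" using assms(2) by simp
qed

lemma cnj_sq_nonneg: "0 \<le> cnj x * x / (of_nat d :: complex)"
proof -
  have "cnj x * x / of_nat d = complex_of_real (((Re x)\<^sup>2 + (Im x)\<^sup>2) / real d)"
    by (simp add: complex_mult_cnj mult.commute[of "cnj x"])
  thus ?thesis by (simp add: less_eq_complex_def)
qed

lemma Mc_psd: "psd_mat (d*d) (Mc d k j)"
proof (rule psd_of_qf)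
  show "Mc d k j \<in> carrier_mat (d * d) (d * d)" by (simp add: Mc_def)
  fix w show "0 \<le> qf (d * d) (Mc d k j) w" unfolding qf_Mc by (intro sum_nonneg cnj_sq_nonneg)
qed

lemma Lset_sub: "j \<in> {1..k} \<Longrightarrow> k \<le> d*d \<Longrightarrow> Lset d k j \<subseteq> {1..d*d} \<and> j \<in> Lset d k j"
  by (auto simp: Lset_def)

lemma Mc_povm:
  assumes "1 \<le> k" "k \<le> d*d"
  shows "is_povm d k (Mc d k)"
  unfolding is_povm_def
proof (intro conjI ballI allI impI Mc_psd)
  fix r s assume rs: "r < d*d" "s < d*d"
  define f where "f l = vv d l r * cnj (vv d l s) / of_nat d" for l
  have Mj: "Mc d k j $$ (r,s) = sum f (Lset d k j)" for j
    using rs by (simp add: Mc_def f_def)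
  have "(\<Sum>j\<in>{1..k}. Mc d k j $$ (r,s)) = (\<Sum>j\<in>insert k {1..<k}. sum f (Lset d k j))"
    unfolding Mj using assms(1) by (intro sum.cong refl) auto
  also have "\<dots> = sum f {k..d*d} + (\<Sum>j\<in>{1..<k}. f j)"
    by (subst sum.insert) (auto simp: Lset_def)
  also have "\<dots> = sum f ({1..<k} \<union> {k..d*d})"
    by (subst sum.union_disjoint) auto
  also have "{1..<k} \<union> {k..d*d} = {1..d*d}" using assms by auto
  also have "sum f {1..d*d} = (if r = s then 1 else 0)"
  proof -
    have "d \<noteq> 0" using rs by (cases "d = 0") auto
    thus ?thesis unfolding f_def sum_divide_distrib[symmetric] vv_compl[OF rs] by simp
  qed
  finally show "(\<Sum>i\<in>{1..k}. Mc d k i $$ (r, s)) = 1\<^sub>m (d*d) $$ (r, s)" using rs by simp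
qed

lemma qf_Mc_val:
  assumes "j \<in> {1..k}" "k \<le> d*d"
  shows "qf (d*d) (Mc d k j) (vv d j) = of_nat d"
proof -
  have L: "Lset d k j \<subseteq> {1..d*d}" "j \<in> Lset d k j" using Lset_sub[OF assms] by auto
  have dp: "d \<noteq> 0" using assms by (cases "d = 0") auto
  have "qf (d*d) (Mc d k j) (vv d j) = (\<Sum>l\<in>Lset d k j. if l = j then of_nat d else 0)"
    unfolding qf_Mc
  proof (intro sum.cong refl)
    fix l assume "l \<in> Lset d k j"
    hence "l \<in> {1..d*d}" "j \<in> {1..d*d}" using L by auto
    thus "cnj (\<Sum>s<d*d. cnj (vv d l s) * vv d j s) * (\<Sum>s<d*d. cnj (vv d l s) * vv d j s) / of_nat d
       = (if l = j then of_nat d else 0)"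
      using vv_orth[of j d l] dp by simp
  qed
  also have "\<dots> = of_nat d" using L by (simp add: sum.delta finite_subset[OF L(1)])
  finally show ?thesis .
qed


lemma qf_cong: "(\<And>r. r < n \<Longrightarrow> w r = w' r) \<Longrightarrow> qf n M w = qf n M w'"
  unfolding qf_def by (intro sum.cong refl) auto

lemma exist:
  assumes "2 \<le> d" "1 \<le> k" "k \<le> d^2"
  shows "tele_fid d k (Mc d k) (\<lambda>j. Wm d (ia d j) (ib d j)) = complex_of_real (real k / real d ^ 2)"
proof -
  have kd: "k \<le> d*d" using assms(3) by (simp add: power2_eq_square)
  have dp: "0 < d" using assms by simp
  have "tele_fid d k (Mc d k) (\<lambda>j. Wm d (ia d j) (ib d j)) =
     (\<Sum>j\<in>{1..k}. qf (d*d) (Mc d k j) (vv d j) / (of_nat d)^3)"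
    unfolding tele_fid_def fid_term
  proof (intro sum.cong refl arg_cong2[where f="(/)"] qf_cong)
    fix j r assume "r < d*d"
    hence "r div d < d" "r mod d < d" using dp by (auto simp: less_mult_imp_div_less)
    thus "Wm d (ia d j) (ib d j) $$ (r div d, r mod d) = vv d j r"
      by (simp add: Wm_def vv_def)
  qed
  also have "\<dots> = (\<Sum>j\<in>{1..k}. of_nat d / (of_nat d)^3)"
    using qf_Mc_val kd by (intro sum.cong refl) auto
  also have "\<dots> = complex_of_real (real k / real d ^ 2)"
    using dp by (simp add: power_def field_simps)
  finally show ?thesis .
qed

theorem proposition1:
  fixes d k :: nat
  assumes "2 \<le> d" and "1 \<le> k" and "k \<le> d^2"
  shows "(\<exists>M U. is_povm d k M \<and> (\<forall>i\<in>{1..k}. unitary_mat d (U i)) \<and>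
            tele_fid d k M U = complex_of_real (real k / real d ^ 2)) \<and>
         (\<forall>M U. is_povm d k M \<and> (\<forall>i\<in>{1..k}. unitary_mat d (U i)) \<longrightarrow>
            tele_fid d k M U \<le> complex_of_real (real k / real d ^ 2))"
proof (intro conjI allI impI)
  have kd: "k \<le> d*d" using assms(3) by (simp add: power2_eq_square)
  show "\<exists>M U. is_povm d k M \<and> (\<forall>i\<in>{1..k}. unitary_mat d (U i)) \<and>
            tele_fid d k M U = complex_of_real (real k / real d ^ 2)"
  proof -
    have 1: "is_povm d k (Mc d k)" by (rule Mc_povm[OF assms(2) kd])
    have 2: "\<forall>i\<in>{1..k}. unitary_mat d (Wm d (ia d i) (ib d i))"
      using Wm_unitary[of d] assms(1) by simp
    have 3: "tele_fid d k (Mc d k) (\<lambda>j. Wm d (ia d j) (ib d j)) = complex_of_real (real k / real d ^ 2)"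
      by (rule exist[OF assms])
    show ?thesis
      by (rule exI[of _ "Mc d k"], rule exI[of _ "\<lambda>j. Wm d (ia d j) (ib d j)"]) (use 1 2 3 in simp)
  qed
next
  fix M U assume "is_povm d k M \<and> (\<forall>i\<in>{1..k}. unitary_mat d (U i))"
  thus "tele_fid d k M U \<le> complex_of_real (real k / real d ^ 2)" using upper[of d k M U] by simp
qed

end
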